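(* Let $G$ be a graph with $n$ nodes and graph Laplacian $\mathbf{L}$. Then a matrix $\mathbf{P}\in\mathbb{R}^{n\times d}$ is node- and adjacency-identifying if there exist matrices $\mathbf{W}^Q,\mathbf{W}^K\in\mathbb{R}^{d\times d}$ such that $$\frac{1}{\sqrt{d_k}}(\mathbf{P}\mathbf{W}^Q)(\mathbf{P}\mathbf{W}^K)^T=\mathbf{L}.$$
   Context: Graphs are finite, undirected, without self-loops and without isolated nodes; $\mathbf{L}=\mathbf{D}-\mathbf{A}(G)$ with $\mathbf{D}$ the degree matrix and $\mathbf{A}(G)$ the adjacency matrix; $d_k>0$ is a fixed constant. For $\mathbf{W}^Q,\mathbf{W}^K$ put $\tilde{\mathbf{P}}=\frac{1}{\sqrt{d_k}}\mathbf{P}\mathbf{W}^Q(\mathbf{P}\mathbf{W}^K)^T$. $\mathbf{P}$ is node-identifying if for some $\mathbf{W}^Q,\mathbf{W}^K$: $\tilde{\mathbf{P}}_{ij}=\max_k\tilde{\mathbf{P}}_{ik}\iff i=j$; adjacency-identifying if for some (possibly different) $\mathbf{W}^Q,\mathbf{W}^K$: $\tilde{\mathbf{P}}_{ij}=\max_k\tilde{\mathbf{P}}_{ik}\iff\mathbf{A}(G)_{ij}=1$. *)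

theory Defs
  imports "HOL-Analysis.Analysis"
begin

definition graph :: "('n::finite \<Rightarrow> 'n \<Rightarrow> bool) \<Rightarrow> bool" where
  "graph E \<longleftrightarrow> (\<forall>i j. E i j \<longrightarrow> E j i) \<and> (\<forall>i. \<not> E i i) \<and> (\<forall>i. \<exists>j. E i j)"

definition adj_matrix :: "('n::finite \<Rightarrow> 'n \<Rightarrow> bool) \<Rightarrow> real^'n^'n" where
  "adj_matrix E = (\<chi> i j. if E i j then 1 else 0)"

definition degree_matrix :: "('n::finite \<Rightarrow> 'n \<Rightarrow> bool) \<Rightarrow> real^'n^'n" where
  "degree_matrix E = (\<chi> i j. if i = j then real (card {k. E i k}) else 0)"

definition laplacian :: "('n::finite \<Rightarrow> 'n \<Rightarrow> bool) \<Rightarrow> real^'n^'n" where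
  "laplacian E = degree_matrix E - adj_matrix E"

definition ptilde :: "real \<Rightarrow> real^'d^'n \<Rightarrow> real^'d^'d \<Rightarrow> real^'d^'d \<Rightarrow> real^'n^'n" where
  "ptilde dk P WQ WK = (1 / sqrt dk) *\<^sub>R ((P ** WQ) ** transpose (P ** WK))"

definition node_identifying :: "real \<Rightarrow> real^'d^'n::finite \<Rightarrow> bool" where
  "node_identifying dk P \<longleftrightarrow> (\<exists>WQ WK::real^'d^'d. \<forall>i j.
     ptilde dk P WQ WK $ i $ j = Max (range (\<lambda>k. ptilde dk P WQ WK $ i $ k)) \<longleftrightarrow> i = j)"

definition adjacency_identifying ::
  "real \<Rightarrow> ('n::finite \<Rightarrow> 'n \<Rightarrow> bool) \<Rightarrow> real^'d^'n \<Rightarrow> bool" where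
  "adjacency_identifying dk E P \<longleftrightarrow> (\<exists>WQ WK::real^'d^'d. \<forall>i j.
     ptilde dk P WQ WK $ i $ j = Max (range (\<lambda>k. ptilde dk P WQ WK $ i $ k))
       \<longleftrightarrow> adj_matrix E $ i $ j = 1)"

end

theory Submission
  imports Defs
begin

lemma ptilde_neg: "ptilde dk P (-WQ) WK = - ptilde dk P WQ WK"
  by (simp add: ptilde_def vec_eq_iff matrix_matrix_mult_def transpose_def sum_negf)

lemma lap_entry: "laplacian E $ i $ j =
   (if i = j then real (card {k. E i k}) else 0) - (if E i j then 1 else 0)"
  by (simp add: laplacian_def degree_matrix_def adj_matrix_def)

lemma max_range_eq:
  fixes f :: "'n::finite \<Rightarrow> real"
  assumes "f a = m" "\<And>k. f k \<le> m"
  shows "Max (range f) = m"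
  using assms by (intro Max_eqI) auto

theorem lemmaF6:
  fixes E :: "'n::finite \<Rightarrow> 'n \<Rightarrow> bool"
    and P :: "real^'d^'n"
    and dk :: real
  assumes "graph E"
    and "dk > 0"
    and "\<exists>WQ WK::real^'d^'d. ptilde dk P WQ WK = laplacian E"
  shows "node_identifying dk P \<and> adjacency_identifying dk E P"
proof -
  obtain WQ WK :: "real^'d^'d" where W: "ptilde dk P WQ WK = laplacian E"
    using assms(3) by blast
  have sym: "\<And>i j. E i j \<Longrightarrow> E j i" and irr: "\<And>i. \<not> E i i" and ex: "\<And>i. \<exists>j. E i j"
    using assms(1) unfolding graph_def by auto
  have deg: "real (card {k. E i k}) \<ge> 1" for i
  proof -
    obtain j where "E i j" using ex by blast
    hence "{k. E i k} \<noteq> {}" by blast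
    hence "card {k. E i k} \<noteq> 0" using card_eq_0_iff[of "{k. E i k}"] finite[of "{k. E i k}"] by blast
    hence "card {k. E i k} \<ge> 1" by linarith
    thus ?thesis by (metis of_nat_1 of_nat_le_iff)
  qed
  have node: "node_identifying dk P"
    unfolding node_identifying_def
  proof (intro exI allI)
    fix i j :: 'n
    let ?f = "\<lambda>k. ptilde dk P WQ WK $ i $ k"
    have M: "Max (range ?f) = real (card {k. E i k})"
      apply (rule max_range_eq[where a = i])
      using deg[of i] irr[of i] by (auto simp: W lap_entry)
    show "(?f j = Max (range ?f)) = (i = j)"
      unfolding M using deg[of i] irr[of i] ex[of i] by (auto simp: W lap_entry)
  qed
  have adj: "adjacency_identifying dk E P"
    unfolding adjacency_identifying_def
  proof (intro exI allI)
    fix i j :: 'n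
    let ?f = "\<lambda>k. ptilde dk P (-WQ) WK $ i $ k"
    obtain a where a: "E i a" using ex by blast
    have M: "Max (range ?f) = 1"
      apply (rule max_range_eq[where a = a])
      using deg[of i] irr[of i] a by (auto simp: W ptilde_neg lap_entry)
    show "(?f j = Max (range ?f)) = (adj_matrix E $ i $ j = 1)"
      unfolding M using deg[of i] irr[of i] ex[of i] by (auto simp: W ptilde_neg lap_entry adj_matrix_def)
  qed
  show ?thesis using node adj by blast
qed

end
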